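(* Let $R$ be $\mathbb{Z}$ or $\mathbb{Z}/m\mathbb{Z}$ with $m\ge2$, let $\Lambda$ be a free abelian group with basis $x_1,\ldots,x_n$, and let $\vec q=(q_1,\ldots,q_n)$ be an $n$-tuple in $R[\Lambda]$ satisfying the generalized flatness condition. Then every syzygy of $\vec q$ is trivial.
   Context: $R[\Lambda]$ is identified with $R[x_1^{\pm1},\ldots,x_n^{\pm1}]$; $\Lambda_i=\langle x_1,\ldots,x_i\rangle$. A polynomial $p\in R[\Lambda_i]$ is a divisor with respect to $x_i$ if, writing $p=p_kx_i^k+\cdots+p_mx_i^m$ with $p_j\in R[\Lambda_{i-1}]$ and $p_k\ne0$, $p_k$ is a monic monomial in $x_1,\ldots,x_{i-1}$. $(r_1,\ldots,r_n)$ satisfies the flatness condition if $r_i\in R[\Lambda_i]$ and $r_i$ is a divisor with respect to $x_i$ for all $i$; $\vec q$ satisfies the generalized flatness condition if $\vec qA$ satisfies the flatness condition for some $A\in GL_n(R[\Lambda])$. A syzygy of $\vec q$ is $(f_1,\ldots,f_n)\in R[\Lambda]^n$ with $\sum_if_iq_i=0$; it is trivial if it lies in the $R[\Lambda]$-submodule generated by the vectors $S_{ij}$ ($i\ne j$) having $q_j$ in position $i$, $-q_i$ in position $j$, and $0$ elsewhere. *)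

theory Defs
  imports Main "HOL-Library.Poly_Mapping"
begin

text \<open>The group ring R[Lambda] of the free abelian group Lambda = Z^n is modelled
as finitely supported functions from exponent vectors (nat =>0 int) to R.
Variable x_(j+1) of the paper corresponds to index j (0-based). An element lies in
R[Lambda_i] (i.e. involves only x_1,...,x_i) iff all exponent vectors of its support
only use indices < i.\<close>

type_synonym 'a laurent = "(nat \<Rightarrow>\<^sub>0 int) \<Rightarrow>\<^sub>0 'a"

definition in_LR :: "nat \<Rightarrow> ('a::zero) laurent \<Rightarrow> bool" where
  "in_LR i p \<longleftrightarrow> (\<forall>e \<in> Poly_Mapping.keys p. Poly_Mapping.keys e \<subseteq> {..<i})"

text \<open>Coefficient of x_j^k: the Laurent polynomial p_k (not involving variable j)
with p = sum_k p_k x_j^k.\<close>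
definition coeff_slice :: "('a::zero) laurent \<Rightarrow> nat \<Rightarrow> int \<Rightarrow> 'a laurent" where
  "coeff_slice p j k = Abs_poly_mapping
     (\<lambda>e. if Poly_Mapping.lookup e j = 0 then Poly_Mapping.lookup p (e + Poly_Mapping.single j k) else 0)"

definition low_deg :: "('a::zero) laurent \<Rightarrow> nat \<Rightarrow> int" where
  "low_deg p j = Min ((\<lambda>e. Poly_Mapping.lookup e j) ` Poly_Mapping.keys p)"

text \<open>p in R[Lambda_(j+1)] is a divisor with respect to x_(j+1) (index j):
the lowest coefficient p_k is nonzero and a monic monomial in x_1..x_j (indices < j).\<close>
definition divisor_wrt :: "nat \<Rightarrow> ('a::{zero,one}) laurent \<Rightarrow> bool" where
  "divisor_wrt j p \<longleftrightarrow> in_LR (Suc j) p \<and> p \<noteq> 0 \<and>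
     (\<exists>e. Poly_Mapping.keys e \<subseteq> {..<j} \<and> coeff_slice p j (low_deg p j) = Poly_Mapping.single e 1)"

definition flatness :: "nat \<Rightarrow> (nat \<Rightarrow> ('a::{zero,one}) laurent) \<Rightarrow> bool" where
  "flatness n r \<longleftrightarrow> (\<forall>j<n. in_LR (Suc j) (r j) \<and> divisor_wrt j (r j))"

definition vec_mat :: "nat \<Rightarrow> (nat \<Rightarrow> ('a::comm_ring_1) laurent) \<Rightarrow> (nat \<Rightarrow> nat \<Rightarrow> 'a laurent)
     \<Rightarrow> nat \<Rightarrow> 'a laurent" where
  "vec_mat n q A = (\<lambda>j. \<Sum>i<n. q i * A i j)"

definition is_GL :: "nat \<Rightarrow> (nat \<Rightarrow> nat \<Rightarrow> ('a::comm_ring_1) laurent) \<Rightarrow> bool" where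
  "is_GL n A \<longleftrightarrow> (\<forall>i<n. \<forall>j<n. in_LR n (A i j)) \<and>
     (\<exists>B. (\<forall>i<n. \<forall>j<n. in_LR n (B i j)) \<and>
          (\<forall>i<n. \<forall>j<n. (\<Sum>k<n. A i k * B k j) = (if i = j then 1 else 0)) \<and>
          (\<forall>i<n. \<forall>j<n. (\<Sum>k<n. B i k * A k j) = (if i = j then 1 else 0)))"

definition gen_flatness :: "nat \<Rightarrow> (nat \<Rightarrow> ('a::comm_ring_1) laurent) \<Rightarrow> bool" where
  "gen_flatness n q \<longleftrightarrow> (\<exists>A. is_GL n A \<and> flatness n (vec_mat n q A))"

definition syzygy :: "nat \<Rightarrow> (nat \<Rightarrow> ('a::comm_ring_1) laurent) \<Rightarrow> (nat \<Rightarrow> 'a laurent) \<Rightarrow> bool" where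
  "syzygy n q f \<longleftrightarrow> (\<forall>i<n. in_LR n (f i)) \<and> (\<Sum>i<n. f i * q i) = 0"

definition S_vec :: "(nat \<Rightarrow> ('a::comm_ring_1) laurent) \<Rightarrow> nat \<Rightarrow> nat \<Rightarrow> nat \<Rightarrow> 'a laurent" where
  "S_vec q i j = (\<lambda>k. if k = i then q j else if k = j then - q i else 0)"

definition trivial_syzygy :: "nat \<Rightarrow> (nat \<Rightarrow> ('a::comm_ring_1) laurent) \<Rightarrow> (nat \<Rightarrow> 'a laurent) \<Rightarrow> bool" where
  "trivial_syzygy n q f \<longleftrightarrow> (\<exists>c. (\<forall>i<n. \<forall>j<n. in_LR n (c i j)) \<and>
     (\<forall>k<n. f k = (\<Sum>i<n. \<Sum>j\<in>{..<n} - {i}. c i j * S_vec q i j k)))"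

end

theory Submission
  imports Defs
begin

lemma in_LR_zero[simp]: "in_LR n 0" by (simp add: in_LR_def)
lemma in_LR_one[simp]: "in_LR n 1" by (simp add: in_LR_def)
lemma in_LR_add[intro]: "in_LR n p \<Longrightarrow> in_LR n q \<Longrightarrow> in_LR n (p + q)"
  unfolding in_LR_def by (auto dest: subsetD[OF keys_add])
lemma in_LR_uminus[simp]: "in_LR n (- p) = in_LR n p"
  unfolding in_LR_def by simp
lemma in_LR_diff[intro]: "in_LR n p \<Longrightarrow> in_LR n q \<Longrightarrow> in_LR n (p - q)"
  unfolding in_LR_def by (auto dest: subsetD[OF keys_diff])
lemma in_LR_mult[intro]: "in_LR n p \<Longrightarrow> in_LR n q \<Longrightarrow> in_LR n (p * q)"
  unfolding in_LR_def
proof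
  fix e assume a: "\<forall>e\<in>Poly_Mapping.keys p. Poly_Mapping.keys e \<subseteq> {..<n}"
    "\<forall>e\<in>Poly_Mapping.keys q. Poly_Mapping.keys e \<subseteq> {..<n}" "e \<in> Poly_Mapping.keys (p * q)"
  then obtain x y where "x \<in> Poly_Mapping.keys p" "y \<in> Poly_Mapping.keys q" "e = x + y"
    using keys_mult by blast
  moreover have "Poly_Mapping.keys (x + y) \<subseteq> Poly_Mapping.keys x \<union> Poly_Mapping.keys y" by (rule keys_add)
  ultimately show "Poly_Mapping.keys e \<subseteq> {..<n}" using a by blast
qed
lemma in_LR_sum[intro]: "(\<And>i. i \<in> I \<Longrightarrow> in_LR n (f i)) \<Longrightarrow> in_LR n (sum f I)"
  by (induction I rule: infinite_finite_induct) auto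
lemma in_LR_single[intro]: "Poly_Mapping.keys e \<subseteq> {..<n} \<Longrightarrow> in_LR n (Poly_Mapping.single e c)"
  unfolding in_LR_def by simp
lemma in_LR_mono: "in_LR m p \<Longrightarrow> m \<le> n \<Longrightarrow> in_LR n p"
  unfolding in_LR_def by (meson order.trans lessThan_subset_iff)

definition part :: "nat \<Rightarrow> int \<Rightarrow> ('a::zero) laurent \<Rightarrow> 'a laurent" where
  "part m k p = Abs_poly_mapping (\<lambda>e. if Poly_Mapping.lookup e m = k then Poly_Mapping.lookup p e else 0)"

lemma lookup_part: "Poly_Mapping.lookup (part m k p) e =
   (if Poly_Mapping.lookup e m = k then Poly_Mapping.lookup p e else 0)"
proof -
  have "finite {e. (if Poly_Mapping.lookup e m = k then Poly_Mapping.lookup p e else 0) \<noteq> 0}"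
    by (rule finite_subset[OF _ finite_lookup[of p]]) (simp add: subset_iff)
  then show ?thesis unfolding part_def by simp
qed

lemma keys_part: "Poly_Mapping.keys (part m k p) = {e \<in> Poly_Mapping.keys p. Poly_Mapping.lookup e m = k}"
  by (auto simp: in_keys_iff lookup_part split: if_splits)

lemma part_add: "part m k (p + q) = part m k p + part m k (q::'a::monoid_add laurent)"
  by (rule poly_mapping_eqI) (simp add: lookup_part lookup_add)
lemma part_diff: "part m k (p - q) = part m k p - part m k (q::'a::ab_group_add laurent)"
  by (rule poly_mapping_eqI) (simp add: lookup_part lookup_minus)
lemma part_uminus: "part m k (- q) = - part m k (q::'a::ab_group_add laurent)"
  by (rule poly_mapping_eqI) (simp add: lookup_part)
lemma part_zero[simp]: "part m k 0 = 0"
  by (rule poly_mapping_eqI) (simp add: lookup_part)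
lemma part_sum: "part m k (sum f I) = (\<Sum>i\<in>I. part m k (f i :: 'a::comm_monoid_add laurent))"
  by (induction I rule: infinite_finite_induct) (auto simp: part_add)

lemma part_id: "(\<And>e. e \<in> Poly_Mapping.keys p \<Longrightarrow> Poly_Mapping.lookup e m = k) \<Longrightarrow> part m k p = p"
  by (rule poly_mapping_eqI) (auto simp: lookup_part in_keys_iff)
lemma part_null: "(\<And>e. e \<in> Poly_Mapping.keys p \<Longrightarrow> Poly_Mapping.lookup e m \<noteq> k) \<Longrightarrow> part m k p = 0"
  by (rule poly_mapping_eqI) (auto simp: lookup_part in_keys_iff)

lemma in_LR_part: "in_LR n p \<Longrightarrow> in_LR n (part m k p)"
  unfolding in_LR_def keys_part by auto

lemma keys_mult_comp:
  assumes "\<And>a. a \<in> Poly_Mapping.keys p \<Longrightarrow> P (Poly_Mapping.lookup a m)"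
    "\<And>b. b \<in> Poly_Mapping.keys q \<Longrightarrow> Q (Poly_Mapping.lookup b m)"
    "e \<in> Poly_Mapping.keys (p * (q::'a::comm_ring_1 laurent))"
  shows "\<exists>x y. P x \<and> Q y \<and> Poly_Mapping.lookup e m = x + y"
proof -
  obtain a b where "a \<in> Poly_Mapping.keys p" "b \<in> Poly_Mapping.keys q" "e = a + b"
    using subsetD[OF keys_mult assms(3)] by blast
  then show ?thesis using assms(1,2) by (auto simp: lookup_add)
qed

lemma keys_part_rest: "e \<in> Poly_Mapping.keys (p - part m k p) \<Longrightarrow> Poly_Mapping.lookup e m \<noteq> k
   \<and> e \<in> Poly_Mapping.keys (p::'a::ab_group_add laurent)"
  by (auto simp: in_keys_iff lookup_minus lookup_part split: if_splits)

lemma part_mult_free: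
  fixes h r :: "'a::comm_ring_1 laurent"
  assumes r0: "\<And>e. e \<in> Poly_Mapping.keys r \<Longrightarrow> Poly_Mapping.lookup e m = 0"
  shows "part m k (h * r) = part m k h * r"
proof -
  define h1 where "h1 = h - part m k h"
  have h: "h = part m k h + h1" unfolding h1_def by simp
  have pk: "\<And>e. e \<in> Poly_Mapping.keys (part m k h) \<Longrightarrow> Poly_Mapping.lookup e m = k"
    by (simp add: keys_part)
  have A: "part m k (part m k h * r) = part m k h * r"
    using keys_mult_comp[where P="\<lambda>x. x = k" and Q="\<lambda>x. x = 0", OF pk r0] by (intro part_id) force
  have B: "part m k (h1 * r) = 0"
    using keys_mult_comp[where P="\<lambda>x. x \<noteq> k" and Q="\<lambda>x. x = 0", OF keys_part_rest[THEN conjunct1] r0] unfolding h1_def by (intro part_null) force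
  have "part m k (h * r) = part m k (part m k h * r + h1 * r)"
    by (subst h) (simp add: distrib_right)
  also have "\<dots> = part m k h * r" by (simp only: part_add A B add_0_right)
  finally show ?thesis .
qed

lemma part_low:
  fixes g r :: "'a::comm_ring_1 laurent"
  assumes g: "\<And>e. e \<in> Poly_Mapping.keys g \<Longrightarrow> k \<le> Poly_Mapping.lookup e m"
    and r: "\<And>e. e \<in> Poly_Mapping.keys r \<Longrightarrow> d \<le> Poly_Mapping.lookup e m"
  shows "part m (k + d) (g * r) = part m k g * part m d r"
proof -
  define g1 where "g1 = g - part m k g"
  define r1 where "r1 = r - part m d r"
  have g1: "\<And>e. e \<in> Poly_Mapping.keys g1 \<Longrightarrow> k < Poly_Mapping.lookup e m"
    using g unfolding g1_def by (force dest: keys_part_rest)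
  have r1: "\<And>e. e \<in> Poly_Mapping.keys r1 \<Longrightarrow> d < Poly_Mapping.lookup e m"
    using r unfolding r1_def by (force dest: keys_part_rest)
  have pg: "\<And>e. e \<in> Poly_Mapping.keys (part m k g) \<Longrightarrow> Poly_Mapping.lookup e m = k"
    by (simp add: keys_part)
  have pr: "\<And>e. e \<in> Poly_Mapping.keys (part m d r) \<Longrightarrow> Poly_Mapping.lookup e m = d"
    by (simp add: keys_part)
  have e: "g * r = part m k g * part m d r + (part m k g * r1 + g1 * part m d r + g1 * r1)"
    unfolding g1_def r1_def by (simp add: algebra_simps)
  have A: "part m (k+d) (part m k g * part m d r) = part m k g * part m d r"
    using keys_mult_comp[where P="\<lambda>x. x = k" and Q="\<lambda>x. x = d", OF pg pr] by (intro part_id) force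
  have B1: "part m (k+d) (part m k g * r1) = 0"
    using keys_mult_comp[where P="\<lambda>x. x = k" and Q="\<lambda>x. d < x", OF pg r1] by (intro part_null) force
  have B2: "part m (k+d) (g1 * part m d r) = 0"
    using keys_mult_comp[where P="\<lambda>x. k < x" and Q="\<lambda>x. x = d", OF g1 pr] by (intro part_null) force
  have B3: "part m (k+d) (g1 * r1) = 0"
    using keys_mult_comp[where P="\<lambda>x. k < x" and Q="\<lambda>x. d < x", OF g1 r1] by (intro part_null) force
  have "part m (k+d) (g * r) = part m (k+d) (part m k g * part m d r) + (part m (k+d) (part m k g * r1)
     + part m (k+d) (g1 * part m d r) + part m (k+d) (g1 * r1))"
    by (subst e) (simp only: part_add)
  then show ?thesis by (simp only: A B1 B2 B3 add_0_right)
qed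

lemma lookup_coeff_slice: "Poly_Mapping.lookup (coeff_slice p j k) e =
  (if Poly_Mapping.lookup e j = 0 then Poly_Mapping.lookup p (e + Poly_Mapping.single j k) else 0)"
proof -
  have "{e. (if Poly_Mapping.lookup e j = 0 then Poly_Mapping.lookup p (e + Poly_Mapping.single j k) else 0) \<noteq> 0}
     \<subseteq> (\<lambda>x. x - Poly_Mapping.single j k) ` Poly_Mapping.keys p"
  proof
    fix e assume "e \<in> {e. (if Poly_Mapping.lookup e j = 0 then Poly_Mapping.lookup p (e + Poly_Mapping.single j k) else 0) \<noteq> 0}"
    then have "e + Poly_Mapping.single j k \<in> Poly_Mapping.keys p" by (auto simp: in_keys_iff split: if_splits)
    then show "e \<in> (\<lambda>x. x - Poly_Mapping.single j k) ` Poly_Mapping.keys p"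
      by (rule rev_image_eqI) simp
  qed
  then have "finite {e. (if Poly_Mapping.lookup e j = 0 then Poly_Mapping.lookup p (e + Poly_Mapping.single j k) else 0) \<noteq> 0}"
    by (rule finite_subset) simp
  then show ?thesis unfolding coeff_slice_def by simp
qed

lemma low_deg_le: "e \<in> Poly_Mapping.keys p \<Longrightarrow> low_deg p j \<le> Poly_Mapping.lookup e j"
  unfolding low_deg_def by (rule Min_le) auto

lemma div_part:
  fixes p :: "'a::comm_ring_1 laurent"
  assumes "divisor_wrt m p"
  shows "\<exists>a. Poly_Mapping.keys a \<subseteq> {..<Suc m} \<and> part m (low_deg p m) p = Poly_Mapping.single a 1"
proof -
  define d where "d = low_deg p m"
  obtain e0 where e0: "Poly_Mapping.keys e0 \<subseteq> {..<m}" "coeff_slice p m d = Poly_Mapping.single e0 1"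
    using assms unfolding divisor_wrt_def d_def by blast
  define a where "a = e0 + Poly_Mapping.single m d"
  have e0m: "Poly_Mapping.lookup e0 m = 0" using e0(1) by (auto simp: in_keys_iff)
  have am: "Poly_Mapping.lookup a m = d" by (simp add: a_def lookup_add e0m)
  have ka: "Poly_Mapping.keys a \<subseteq> {..<Suc m}"
    using e0(1) keys_add[of e0 "Poly_Mapping.single m d"] unfolding a_def by (auto split: if_splits dest!: subsetD)
  have "part m d p = Poly_Mapping.single a 1"
  proof (rule poly_mapping_eqI)
    fix e
    show "Poly_Mapping.lookup (part m d p) e = Poly_Mapping.lookup (Poly_Mapping.single a 1) e"
    proof (cases "Poly_Mapping.lookup e m = d")
      case True
      define e' where "e' = e - Poly_Mapping.single m d"
      have e'm: "Poly_Mapping.lookup e' m = 0" by (simp add: e'_def lookup_minus True)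
      have ee: "e = e' + Poly_Mapping.single m d" by (simp add: e'_def)
      have "Poly_Mapping.lookup (part m d p) e = Poly_Mapping.lookup (coeff_slice p m d) e'"
        by (simp add: lookup_part True lookup_coeff_slice e'm ee[symmetric])
      also have "\<dots> = (if e0 = e' then 1 else 0)" by (simp add: e0(2) lookup_single)
      also have "\<dots> = (if a = e then 1 else 0)" unfolding a_def ee by auto
      finally show ?thesis by (simp add: lookup_single)
    next
      case False
      then have "a \<noteq> e" using am by auto
      then show ?thesis using False by (simp add: lookup_part lookup_single)
    qed
  qed
  then show ?thesis using ka unfolding d_def by blast
qed

definition Id :: "nat \<Rightarrow> (nat \<Rightarrow> ('a::comm_ring_1) laurent) \<Rightarrow> nat \<Rightarrow> 'a laurent \<Rightarrow> bool" where
  "Id n r m p \<longleftrightarrow> (\<exists>h. (\<forall>j<m. in_LR n (h j)) \<and> p = (\<Sum>j<m. h j * r j))"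

lemma Id_zero: "Id n r m 0"
  unfolding Id_def by (rule exI[of _ "\<lambda>_. 0"]) simp

lemma Id_add: "Id n r m p \<Longrightarrow> Id n r m q \<Longrightarrow> Id n r m (p + q)"
  unfolding Id_def
proof (elim exE conjE)
  fix h h' assume "\<forall>j<m. in_LR n (h j)" "p = (\<Sum>j<m. h j * r j)" "\<forall>j<m. in_LR n (h' j)" "q = (\<Sum>j<m. h' j * r j)"
  then show "\<exists>h. (\<forall>j<m. in_LR n (h j)) \<and> p + q = (\<Sum>j<m. h j * r j)"
    by (intro exI[of _ "\<lambda>j. h j + h' j"]) (auto simp: distrib_right sum.distrib)
qed

lemma Id_mult: "Id n r m p \<Longrightarrow> in_LR n c \<Longrightarrow> Id n r m (c * p)"
  unfolding Id_def
proof (elim exE conjE)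
  fix h assume "\<forall>j<m. in_LR n (h j)" "p = (\<Sum>j<m. h j * r j)" "in_LR n c"
  then show "\<exists>h. (\<forall>j<m. in_LR n (h j)) \<and> c * p = (\<Sum>j<m. h j * r j)"
    by (intro exI[of _ "\<lambda>j. c * h j"]) (auto simp: sum_distrib_left mult.assoc)
qed

lemma Id_diff: "Id n r m p \<Longrightarrow> Id n r m q \<Longrightarrow> Id n r m (p - q)"
  using Id_add[of n r m p "(-1) * q"] Id_mult[of n r m q "-1"] by simp

lemma Id_part:
  assumes "\<And>j e. j < m \<Longrightarrow> e \<in> Poly_Mapping.keys (r j) \<Longrightarrow> Poly_Mapping.lookup e m = 0"
    and "\<And>e. e \<in> Poly_Mapping.keys p \<Longrightarrow> True"
    and "Id n r m p"
  shows "Id n r m (part m k p)"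
proof -
  obtain h where h: "\<forall>j<m. in_LR n (h j)" "p = (\<Sum>j<m. h j * r j)" using assms(3) unfolding Id_def by blast
  have "part m k p = (\<Sum>j<m. part m k (h j) * r j)"
    unfolding h(2) part_sum
  proof (rule sum.cong[OF refl])
    fix j assume "j \<in> {..<m}"
    then show "part m k (h j * r j) = part m k (h j) * r j"
      using assms(1)[of j] by (intro part_mult_free) auto
  qed
  then show ?thesis unfolding Id_def using h(1) by (intro exI[of _ "\<lambda>j. part m k (h j)"]) (simp add: in_LR_part)
qed

lemma flat_free:
  assumes "flatness n r" "j < m" "m < n" "e \<in> Poly_Mapping.keys (r j)"
  shows "Poly_Mapping.lookup e m = 0"
proof -
  have "in_LR (Suc j) (r j)" using assms unfolding flatness_def by auto
  then have "Poly_Mapping.keys e \<subseteq> {..<Suc j}" using assms(4) unfolding in_LR_def by auto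
  then have "m \<notin> Poly_Mapping.keys e" using assms(2) by auto
  then show ?thesis by (simp add: in_keys_iff)
qed

lemma NZD:
  fixes r :: "nat \<Rightarrow> 'a::comm_ring_1 laurent"
  assumes fl: "flatness n r" and mn: "m < n"
  shows "in_LR n g \<Longrightarrow> Id n r m (g * r m) \<Longrightarrow> Id n r m g"
proof (induction "card ((\<lambda>e. Poly_Mapping.lookup e m) ` Poly_Mapping.keys g)" arbitrary: g rule: less_induct)
  case less
  show ?case
  proof (cases "g = 0")
    case True then show ?thesis by (simp add: Id_zero)
  next
    case False
    define D where "D = (\<lambda>e. Poly_Mapping.lookup e m) ` Poly_Mapping.keys g"
    have finD: "finite D" unfolding D_def by simp
    have neD: "D \<noteq> {}" unfolding D_def using False by simp
    define k where "k = Min D"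
    have kD: "k \<in> D" unfolding k_def using finD neD by simp
    have gk: "\<And>e. e \<in> Poly_Mapping.keys g \<Longrightarrow> k \<le> Poly_Mapping.lookup e m"
      unfolding k_def D_def using finD by auto
    have dv: "divisor_wrt m (r m)" using fl mn unfolding flatness_def by auto
    define d where "d = low_deg (r m) m"
    obtain a where a: "Poly_Mapping.keys a \<subseteq> {..<Suc m}" "part m d (r m) = Poly_Mapping.single a 1"
      using div_part[OF dv] unfolding d_def by blast
    have rd: "\<And>e. e \<in> Poly_Mapping.keys (r m) \<Longrightarrow> d \<le> Poly_Mapping.lookup e m"
      unfolding d_def by (rule low_deg_le)
    have free: "\<And>j e. j < m \<Longrightarrow> e \<in> Poly_Mapping.keys (r j) \<Longrightarrow> Poly_Mapping.lookup e m = 0"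
      using flat_free[OF fl _ mn] by blast
    have "Id n r m (part m (k + d) (g * r m))"
      by (rule Id_part[OF free]) (auto simp: less.prems)
    then have I1: "Id n r m (part m k g * Poly_Mapping.single a 1)"
      using part_low[where g=g and r="r m" and k=k and d=d and m=m, OF gk rd] a(2) by simp
    have ka: "Poly_Mapping.keys a \<subseteq> {..<n}" using a(1) mn by auto
    have "Id n r m (Poly_Mapping.single (-a) 1 * (part m k g * Poly_Mapping.single a 1))"
      by (rule Id_mult[OF I1]) (rule in_LR_single, use ka in simp)
    also have "Poly_Mapping.single (-a) 1 * (part m k g * Poly_Mapping.single a 1) = part m k g"
    proof -
      have "Poly_Mapping.single (-a) 1 * (part m k g * Poly_Mapping.single a 1)
          = part m k g * (Poly_Mapping.single (-a) 1 * Poly_Mapping.single a (1::'a))"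
        by (simp only: mult.assoc mult.commute mult.left_commute)
      also have "\<dots> = part m k g" by (simp add: mult_single)
      finally show ?thesis .
    qed
    finally have Ipk: "Id n r m (part m k g)" .
    define g' where "g' = g - part m k g"
    have g'LR: "in_LR n g'" unfolding g'_def using less.prems(1) in_LR_part by blast
    have rmLR: "in_LR n (r m)" using fl mn unfolding flatness_def using in_LR_mono
      by (metis Suc_leI)
    have "Id n r m (g * r m - part m k g * r m)"
      by (rule Id_diff[OF less.prems(2)]) (metis Id_mult[OF Ipk rmLR] mult.commute)
    then have Ig': "Id n r m (g' * r m)" unfolding g'_def by (simp add: algebra_simps)
    have "(\<lambda>e. Poly_Mapping.lookup e m) ` Poly_Mapping.keys g' \<subseteq> D - {k}"
      unfolding D_def g'_def by (auto dest: keys_part_rest)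
    then have "card ((\<lambda>e. Poly_Mapping.lookup e m) ` Poly_Mapping.keys g') < card D"
      using kD finD by (intro psubset_card_mono) auto
    then have "Id n r m g'" using less.hyps g'LR Ig' unfolding D_def by blast
    then have "Id n r m (g' + part m k g)" using Ipk by (rule Id_add)
    then show ?thesis unfolding g'_def by simp
  qed
qed

definition S0 :: "(nat \<Rightarrow> ('a::comm_ring_1) laurent) \<Rightarrow> nat \<Rightarrow> nat \<Rightarrow> nat \<Rightarrow> 'a laurent" where
  "S0 r i j k = (if j = i then 0 else S_vec r i j k)"

definition Tsum :: "nat \<Rightarrow> (nat \<Rightarrow> ('a::comm_ring_1) laurent) \<Rightarrow> (nat \<Rightarrow> nat \<Rightarrow> 'a laurent) \<Rightarrow> nat \<Rightarrow> 'a laurent" where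
  "Tsum n r c k = (\<Sum>i<n. \<Sum>j<n. c i j * S0 r i j k)"

lemma sum_if_lt: "(m::nat) \<le> n \<Longrightarrow> (\<Sum>j<n. if j < m then X j else 0) = (\<Sum>j<m. X j :: 'b::comm_monoid_add)"
proof -
  assume "m \<le> n"
  then have "{..<n} \<inter> {j. j < m} = {..<m}" by auto
  then show ?thesis by (simp add: sum.If_cases)
qed

lemma sum_minus_if: "finite A \<Longrightarrow> (\<Sum>j\<in>A - {i}. X j) = (\<Sum>j\<in>A. if j = i then 0 else X j :: 'b::comm_monoid_add)"
  by (simp add: sum.If_cases Diff_eq)

lemma Koszul:
  fixes r :: "nat \<Rightarrow> 'a::comm_ring_1 laurent"
  assumes fl: "flatness n r"
  shows "m \<le> n \<Longrightarrow> (\<forall>i<m. in_LR n (f i)) \<Longrightarrow> (\<Sum>i<m. f i * r i) = 0 \<Longrightarrow>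
    \<exists>c. (\<forall>i j. in_LR n (c i j)) \<and> (\<forall>i j. (m \<le> i \<or> m \<le> j) \<longrightarrow> c i j = 0) \<and> (\<forall>k<m. f k = Tsum n r c k)"
proof (induction m arbitrary: f)
  case 0
  show ?case by (rule exI[of _ "\<lambda>_ _. 0"]) simp
next
  case (Suc m)
  have mn: "m < n" using Suc.prems(1) by simp
  have rLR: "\<And>j. j < n \<Longrightarrow> in_LR n (r j)"
    using fl unfolding flatness_def by (meson Suc_leI in_LR_mono)
  have "f m * r m = (\<Sum>i<m. (- f i) * r i)"
    using Suc.prems(3) by (simp add: sum_negf add_eq_0_iff2)
  then have "Id n r m (f m * r m)" unfolding Id_def using Suc.prems(2) by (intro exI[of _ "\<lambda>i. - f i"]) simp
  then have "Id n r m (f m)" using NZD[OF fl mn] Suc.prems(2) by simp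
  then obtain g where g: "\<forall>j<m. in_LR n (g j)" "f m = (\<Sum>j<m. g j * r j)" unfolding Id_def by blast
  define f' where "f' k = f k + g k * r m" for k
  have f'LR: "\<forall>i<m. in_LR n (f' i)" unfolding f'_def using Suc.prems(2) g(1) rLR[OF mn]
    by (intro allI impI in_LR_add in_LR_mult) auto
  have "(\<Sum>i<m. f' i * r i) = (\<Sum>i<m. f i * r i) + r m * (\<Sum>i<m. g i * r i)"
    unfolding f'_def sum_distrib_left sum.distrib[symmetric] by (rule sum.cong) (simp_all add: algebra_simps)
  also have "\<dots> = (\<Sum>i<Suc m. f i * r i)" using g(2) by (simp add: mult.commute)
  finally have "(\<Sum>i<m. f' i * r i) = 0" using Suc.prems(3) by simp
  then obtain c where c: "\<forall>i j. in_LR n (c i j)" "\<forall>i j. (m \<le> i \<or> m \<le> j) \<longrightarrow> c i j = 0"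
     "\<forall>k<m. f' k = Tsum n r c k"
    using Suc.IH[of f'] Suc.prems(1) f'LR by auto
  define c' where "c' i j = c i j + (if i = m \<and> j < m then g j else 0)" for i j
  have T: "Tsum n r c' k = Tsum n r c k + (\<Sum>j<n. (if j < m then g j else 0) * S0 r m j k)" for k
  proof -
    have "Tsum n r c' k = Tsum n r c k + (\<Sum>i<n. \<Sum>j<n. (if i = m \<and> j < m then g j else 0) * S0 r i j k)"
      unfolding Tsum_def c'_def by (simp add: distrib_right sum.distrib)
    also have "(\<Sum>i<n. \<Sum>j<n. (if i = m \<and> j < m then g j else 0) * S0 r i j k)
       = (\<Sum>i<n. if i = m then (\<Sum>j<n. (if j < m then g j else 0) * S0 r m j k) else 0)"
      by (rule sum.cong) auto
    also have "\<dots> = (\<Sum>j<n. (if j < m then g j else 0) * S0 r m j k)" using mn by simp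
    finally show ?thesis .
  qed
  have T0: "Tsum n r c m = 0"
    unfolding Tsum_def
  proof (intro sum.neutral ballI)
    fix i j assume "i \<in> {..<n}" "j \<in> {..<n}"
    show "c i j * S0 r i j m = 0"
      using c(2) by (cases "m \<le> i \<or> m \<le> j") (auto simp: S0_def S_vec_def)
  qed
  show ?case
  proof (intro exI[of _ c'] conjI allI impI)
    fix i j show "in_LR n (c' i j)" unfolding c'_def using c(1) g(1) by auto
  next
    fix i j assume "Suc m \<le> i \<or> Suc m \<le> j"
    then show "c' i j = 0" unfolding c'_def using c(2) by auto
  next
    fix k assume k: "k < Suc m"
    show "f k = Tsum n r c' k"
    proof (cases "k = m")
      case True
      have "(\<Sum>j<n. (if j < m then g j else 0) * S0 r m j k) = (\<Sum>j<n. if j < m then g j * r j else 0)"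
        by (rule sum.cong) (auto simp: S0_def S_vec_def True)
      also have "\<dots> = f m" using g(2) sum_if_lt[of m n] mn by simp
      finally show ?thesis using T[of k] T0 True by simp
    next
      case False
      then have km: "k < m" using k by simp
      have "(\<Sum>j<n. (if j < m then g j else 0) * S0 r m j k) = (\<Sum>j<n. if j = k then - (g k * r m) else 0)"
        by (rule sum.cong) (use km in \<open>auto simp: S0_def S_vec_def\<close>)
      also have "\<dots> = - (g k * r m)" using km mn by simp
      finally have X: "(\<Sum>j<n. (if j < m then g j else 0) * S0 r m j k) = - (g k * r m)" .
      have A1: "Tsum n r c' k = Tsum n r c k - g k * r m" using T[of k] X by simp
      have A2: "f k + g k * r m = Tsum n r c k" using c(3) km unfolding f'_def by simp
      show ?thesis using A1 A2 by (metis add_diff_cancel)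
    qed
  qed
qed

lemma swap4: "(\<Sum>u\<in>U. \<Sum>v\<in>V. \<Sum>a\<in>X. \<Sum>b\<in>Y. F u v a b) = (\<Sum>a\<in>X. \<Sum>b\<in>Y. \<Sum>u\<in>U. \<Sum>v\<in>V. F u v a b :: 'b::comm_monoid_add)"
proof -
  have "(\<Sum>u\<in>U. \<Sum>v\<in>V. \<Sum>a\<in>X. \<Sum>b\<in>Y. F u v a b) = (\<Sum>u\<in>U. \<Sum>a\<in>X. \<Sum>v\<in>V. \<Sum>b\<in>Y. F u v a b)"
    by (rule sum.cong[OF refl], rule sum.swap)
  also have "\<dots> = (\<Sum>u\<in>U. \<Sum>a\<in>X. \<Sum>b\<in>Y. \<Sum>v\<in>V. F u v a b)"
    by (rule sum.cong[OF refl], rule sum.cong[OF refl], rule sum.swap)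
  also have "\<dots> = (\<Sum>a\<in>X. \<Sum>u\<in>U. \<Sum>b\<in>Y. \<Sum>v\<in>V. F u v a b)"
    by (rule sum.swap)
  also have "\<dots> = (\<Sum>a\<in>X. \<Sum>b\<in>Y. \<Sum>u\<in>U. \<Sum>v\<in>V. F u v a b)"
    by (rule sum.cong[OF refl], rule sum.swap)
  finally show ?thesis .
qed

lemma sum_delta_not: "(k::nat) < n \<Longrightarrow> (\<Sum>v<n. if v = k then 0 else X v) = (\<Sum>v<n. X v) - (X k :: 'b::ab_group_add)"
proof -
  assume k: "k < n"
  have "(\<Sum>v<n. X v) = (\<Sum>v<n. (if v = k then X v else 0) + (if v = k then 0 else X v))"
    by (rule sum.cong) auto
  also have "\<dots> = X k + (\<Sum>v<n. if v = k then 0 else X v)" using k by (simp add: sum.distrib)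
  finally show ?thesis by (simp add: algebra_simps)
qed

lemma V_lemma:
  fixes r :: "nat \<Rightarrow> 'a::comm_ring_1 laurent"
  assumes "a < n" "b < n"
  shows "(\<Sum>j<n. A k j * S0 r a b j) = (if a = b then 0 else A k a * r b - A k b * r a)"
proof (cases "a = b")
  case True then show ?thesis by (simp add: S0_def)
next
  case False
  have "(\<Sum>j<n. A k j * S0 r a b j) = (\<Sum>j<n. (if j = a then A k j * r b else 0) + (if j = b then A k j * - r a else 0))"
    by (rule sum.cong) (use False in \<open>auto simp: S0_def S_vec_def\<close>)
  also have "\<dots> = A k a * r b - A k b * r a" using assms by (simp add: sum.distrib)
  finally show ?thesis using False by simp
qed

lemma W_lemma:
  fixes q :: "nat \<Rightarrow> 'a::comm_ring_1 laurent"
  assumes k: "k < n"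
  shows "(\<Sum>u<n. \<Sum>v<n. A u a * A v b * S0 q u v k)
     = A k a * (\<Sum>i<n. q i * A i b) - A k b * (\<Sum>i<n. q i * A i a)"
proof -
  have split: "A u a * A v b * S0 q u v k = (if u = k then (if v = k then 0 else A k a * (q v * A v b)) else 0)
     + (if v = k then (if u = k then 0 else - (A k b * (q u * A u a))) else 0)" for u v
    by (cases "u = k"; cases "v = k"; cases "v = u") (simp_all add: S0_def S_vec_def mult.assoc mult.left_commute)
  have H0: "(\<Sum>u<n. \<Sum>v<n. A u a * A v b * S0 q u v k)
    = (\<Sum>u<n. \<Sum>v<n. (if u = k then (if v = k then 0 else A k a * (q v * A v b)) else 0))
      + (\<Sum>u<n. \<Sum>v<n. (if v = k then (if u = k then 0 else - (A k b * (q u * A u a))) else 0))"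
    unfolding split by (simp only: sum.distrib)
  have H1: "(\<Sum>u<n. \<Sum>v<n. (if u = k then (if v = k then 0 else A k a * (q v * A v b)) else 0))
      = (\<Sum>v<n. (if v = k then 0 else A k a * (q v * A v b)))"
  proof -
    have "(\<Sum>u<n. \<Sum>v<n. (if u = k then (if v = k then 0 else A k a * (q v * A v b)) else 0))
      = (\<Sum>u<n. if u = k then (\<Sum>v<n. (if v = k then 0 else A k a * (q v * A v b))) else 0)"
      by (rule sum.cong) auto
    then show ?thesis using k by simp
  qed
  have H2: "(\<Sum>v<n. (if v = k then 0 else A k a * (q v * A v b))) = A k a * (\<Sum>i<n. q i * A i b) - A k a * (q k * A k b)"
    using k by (simp add: sum_delta_not sum_distrib_left)
  have H3: "(\<Sum>u<n. \<Sum>v<n. (if v = k then (if u = k then 0 else - (A k b * (q u * A u a))) else 0))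
      = (\<Sum>u<n. (if u = k then 0 else - (A k b * (q u * A u a))))"
    using k by simp
  have H4: "(\<Sum>u<n. (if u = k then 0 else - (A k b * (q u * A u a)))) = - (A k b * (\<Sum>i<n. q i * A i a)) + A k b * (q k * A k a)"
    using k by (simp add: sum_delta_not sum_distrib_left sum_negf)
  show ?thesis unfolding H0 H1 H2 H3 H4 by (simp add: algebra_simps)
qed

lemma transfer_T:
  fixes q :: "nat \<Rightarrow> 'a::comm_ring_1 laurent" and A c :: "nat \<Rightarrow> nat \<Rightarrow> 'a laurent"
  assumes k: "k < n"
  defines "rr \<equiv> (\<lambda>j. \<Sum>i<n. q i * A i j)"
  shows "Tsum n q (\<lambda>u v. \<Sum>a<n. \<Sum>b<n. c a b * (A u a * A v b)) k = (\<Sum>j<n. A k j * Tsum n rr c j)"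
proof -
  have "Tsum n q (\<lambda>u v. \<Sum>a<n. \<Sum>b<n. c a b * (A u a * A v b)) k
      = (\<Sum>u<n. \<Sum>v<n. \<Sum>a<n. \<Sum>b<n. c a b * (A u a * A v b * S0 q u v k))"
    unfolding Tsum_def by (simp add: sum_distrib_right mult.assoc)
  also have "\<dots> = (\<Sum>a<n. \<Sum>b<n. \<Sum>u<n. \<Sum>v<n. c a b * (A u a * A v b * S0 q u v k))"
    by (rule swap4)
  also have "\<dots> = (\<Sum>a<n. \<Sum>b<n. c a b * (A k a * rr b - A k b * rr a))"
    unfolding rr_def by (simp add: sum_distrib_left[symmetric] W_lemma[OF k])
  finally have L: "Tsum n q (\<lambda>u v. \<Sum>a<n. \<Sum>b<n. c a b * (A u a * A v b)) k
      = (\<Sum>a<n. \<Sum>b<n. c a b * (A k a * rr b - A k b * rr a))" .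
  have "(\<Sum>j<n. A k j * Tsum n rr c j) = (\<Sum>j<n. \<Sum>a<n. \<Sum>b<n. c a b * (A k j * S0 rr a b j))"
    unfolding Tsum_def by (simp add: sum_distrib_left mult_ac)
  also have "\<dots> = (\<Sum>a<n. \<Sum>b<n. \<Sum>j<n. c a b * (A k j * S0 rr a b j))"
  proof -
    have "(\<Sum>j<n. \<Sum>a<n. \<Sum>b<n. c a b * (A k j * S0 rr a b j)) = (\<Sum>a<n. \<Sum>j<n. \<Sum>b<n. c a b * (A k j * S0 rr a b j))"
      by (rule sum.swap)
    also have "\<dots> = (\<Sum>a<n. \<Sum>b<n. \<Sum>j<n. c a b * (A k j * S0 rr a b j))"
      by (rule sum.cong[OF refl], rule sum.swap)
    finally show ?thesis .
  qed
  also have "\<dots> = (\<Sum>a<n. \<Sum>b<n. c a b * (if a = b then 0 else A k a * rr b - A k b * rr a))"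
    by (simp add: sum_distrib_left[symmetric] V_lemma)
  also have "\<dots> = (\<Sum>a<n. \<Sum>b<n. c a b * (A k a * rr b - A k b * rr a))"
    by (intro sum.cong refl) auto
  finally show ?thesis using L by simp
qed

theorem lemma2p10:
  fixes q :: "nat \<Rightarrow> ('a::comm_ring_1) laurent" and n :: nat
  assumes R_cyclic: "surj (of_int :: int \<Rightarrow> 'a)"
    and R_nontrivial: "(1::'a) \<noteq> 0"
    and q_in: "\<forall>i<n. in_LR n (q i)"
    and gf: "gen_flatness n q"
    and syz: "syzygy n q f"
  shows "trivial_syzygy n q f"
proof -
  obtain A where GL: "is_GL n A" and fl: "flatness n (vec_mat n q A)"
    using gf unfolding gen_flatness_def by blast
  define rr where "rr = vec_mat n q A"
  have rr: "rr j = (\<Sum>i<n. q i * A i j)" for j unfolding rr_def vec_mat_def by simp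
  obtain B where ALR: "\<forall>i<n. \<forall>j<n. in_LR n (A i j)" and BLR: "\<forall>i<n. \<forall>j<n. in_LR n (B i j)"
    and AB: "\<forall>i<n. \<forall>j<n. (\<Sum>k<n. A i k * B k j) = (if i = j then 1 else 0)"
    and BA: "\<forall>i<n. \<forall>j<n. (\<Sum>k<n. B i k * A k j) = (if i = j then 1 else 0)"
    using GL unfolding is_GL_def by blast
  have fLR: "\<forall>i<n. in_LR n (f i)" and fs: "(\<Sum>i<n. f i * q i) = 0"
    using syz unfolding syzygy_def by auto
  define g where "g j = (\<Sum>i<n. B j i * f i)" for j
  have gLR: "\<forall>j<n. in_LR n (g j)"
    unfolding g_def using BLR fLR by (intro allI impI in_LR_sum in_LR_mult) auto
  have "(\<Sum>j<n. g j * rr j) = (\<Sum>j<n. \<Sum>l<n. \<Sum>i<n. (f i * q l) * (A l j * B j i))"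
    unfolding g_def rr by (simp add: sum_distrib_left sum_distrib_right mult_ac)
  also have "\<dots> = (\<Sum>l<n. \<Sum>i<n. \<Sum>j<n. (f i * q l) * (A l j * B j i))"
  proof -
    have "(\<Sum>j<n. \<Sum>l<n. \<Sum>i<n. (f i * q l) * (A l j * B j i)) = (\<Sum>l<n. \<Sum>j<n. \<Sum>i<n. (f i * q l) * (A l j * B j i))"
      by (rule sum.swap)
    also have "\<dots> = (\<Sum>l<n. \<Sum>i<n. \<Sum>j<n. (f i * q l) * (A l j * B j i))"
      by (rule sum.cong[OF refl], rule sum.swap)
    finally show ?thesis .
  qed
  also have "\<dots> = (\<Sum>l<n. \<Sum>i<n. (f i * q l) * (if l = i then 1 else 0))"
    by (intro sum.cong refl) (simp add: sum_distrib_left[symmetric] AB)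
  also have "\<dots> = (\<Sum>l<n. f l * q l)" by (simp add: if_distrib cong: if_cong)
  finally have gs: "(\<Sum>j<n. g j * rr j) = 0" using fs by simp
  obtain c where cLR: "\<forall>i j. in_LR n (c i j)" and cT: "\<forall>k<n. g k = Tsum n rr c k"
    using Koszul[OF fl[folded rr_def], of n g] gLR gs by auto
  have fA: "f k = (\<Sum>j<n. A k j * g j)" if k: "k < n" for k
  proof -
    have "(\<Sum>j<n. A k j * g j) = (\<Sum>j<n. \<Sum>i<n. (A k j * B j i) * f i)"
      unfolding g_def by (simp add: sum_distrib_left mult_ac)
    also have "\<dots> = (\<Sum>i<n. \<Sum>j<n. (A k j * B j i) * f i)" by (rule sum.swap)
    also have "\<dots> = (\<Sum>i<n. (if k = i then 1 else 0) * f i)"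
      by (intro sum.cong refl) (simp add: sum_distrib_right[symmetric] AB k)
    also have "\<dots> = (\<Sum>i<n. if k = i then f i else 0)" by (rule sum.cong) auto
    also have "\<dots> = f k" using k by simp
    finally show ?thesis by simp
  qed
  define c2 where "c2 u v = (\<Sum>a<n. \<Sum>b<n. c a b * (A u a * A v b))" for u v
  show ?thesis unfolding trivial_syzygy_def
  proof (intro exI[of _ c2] conjI allI impI)
    fix i j assume "i < n" "j < n"
    then show "in_LR n (c2 i j)" unfolding c2_def using cLR ALR
      by (intro in_LR_sum in_LR_mult) auto
  next
    fix k assume k: "k < n"
    have "f k = (\<Sum>j<n. A k j * Tsum n rr c j)" using fA[OF k] cT by simp
    also have "\<dots> = Tsum n q c2 k" unfolding c2_def rr_def vec_mat_def
      using transfer_T[OF k, where q=q and A=A and c=c] by simp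
    also have "\<dots> = (\<Sum>i<n. \<Sum>j\<in>{..<n} - {i}. c2 i j * S_vec q i j k)"
      unfolding Tsum_def S0_def
      by (rule sum.cong[OF refl], subst sum_minus_if, simp, rule sum.cong, auto)
    finally show "f k = (\<Sum>i<n. \<Sum>j\<in>{..<n} - {i}. c2 i j * S_vec q i j k)" .
  qed
qed

end
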